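(* Let $s>0$, $p\in(0,\infty)$, $q\in(1,\infty)$ with $s>\frac1p-1$, and let $H$ be the Hilbert transform on $\mathbb{R}$. Suppose $\alpha\ge0$ is such that there is $C>0$ with $$\|Hf\|_{L^p(w)}\le C[w]_{A_q}^\alpha\|\mathcal{M}^sf\|_{L^p(w)}$$ for all $w\in A_q$ and all $f\in H^p(w)\cap L^1_{\mathrm{loc}}(\mathbb{R})$. Then $\alpha\ge1$.
   Context: Weights are locally integrable positive functions on $\mathbb{R}$, $\|f\|_{L^p(w)}=(\int|f|^pw)^{1/p}$, $[w]_{A_q}:=\sup_I\langle w\rangle_I\langle w^{-1/(q-1)}\rangle_I^{q-1}$ over intervals $I$, $w\in A_q$ iff finite. $H^p(w)$: tempered distributions $f$ with $\|\sup_{|x-y|\le t}|\psi_t*f(y)|\|_{L^p(w)}<\infty$ for a fixed $\psi\in\mathcal{S}(\mathbb{R})$ with $\int\psi=1$, $\psi_t=t^{-1}\psi(\cdot/t)$. Write $s=m+\delta$, $m\in\mathbb{N}$, $\delta\in(0,1]$; $\mathcal{F}_s(I)$ is the set of $\varphi$ supported in the interval $I$ with $|\varphi^{(k)}|\le|I|^{-k}$ ($k\le m$) and $|\varphi^{(m)}(y)-\varphi^{(m)}(y')|\le|y-y'|^\delta|I|^{-s}$; $\mathcal{M}^sf(x)=\sup_{I\ni x}\sup_{\varphi\in\mathcal{F}_s(I)}\frac1{|I|}|\int_If\varphi|$. *)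

theory Defs
  imports "HOL-Analysis.Analysis"
begin

text \<open>Real powers of extended nonnegative reals (used only with positive exponents):
  infinity stays infinity.\<close>
definition enn_powr :: "ennreal \<Rightarrow> real \<Rightarrow> ennreal" where
  "enn_powr x r = (if x = top then top else ennreal (enn2real x powr r))"

definition is_weight :: "(real \<Rightarrow> real) \<Rightarrow> bool" where
  "is_weight w \<longleftrightarrow> (\<forall>x. w x > 0) \<and> w \<in> borel_measurable borel \<and>
     (\<forall>a b. set_integrable lborel {a..b} w)"

definition wnorm :: "real \<Rightarrow> (real \<Rightarrow> real) \<Rightarrow> (real \<Rightarrow> ennreal) \<Rightarrow> ennreal" where
  "wnorm p w F = enn_powr (\<integral>\<^sup>+ x. enn_powr (F x) p * ennreal (w x) \<partial>lborel) (1 / p)"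

definition avg :: "(real \<Rightarrow> real) \<Rightarrow> real \<Rightarrow> real \<Rightarrow> real" where
  "avg g a b = (LINT x:{a..b}|lborel. g x) / (b - a)"

definition Aq_vals :: "real \<Rightarrow> (real \<Rightarrow> real) \<Rightarrow> real set" where
  "Aq_vals q w = {avg w a b * avg (\<lambda>x. w x powr (-1 / (q - 1))) a b powr (q - 1) | a b. a < b}"

definition in_Aq :: "real \<Rightarrow> (real \<Rightarrow> real) \<Rightarrow> bool" where
  "in_Aq q w \<longleftrightarrow> is_weight w \<and>
     (\<forall>a b. set_integrable lborel {a..b} (\<lambda>x. w x powr (-1 / (q - 1)))) \<and>
     bdd_above (Aq_vals q w)"

definition Aq_const :: "real \<Rightarrow> (real \<Rightarrow> real) \<Rightarrow> real" where
  "Aq_const q w = Sup (Aq_vals q w)"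

text \<open>The fixed Schwartz function \<open>\<psi>\<close> with integral 1 (Gaussian) and its dilates.\<close>
definition psi :: "real \<Rightarrow> real" where
  "psi x = exp (- pi * x\<^sup>2)"

definition psi_t :: "real \<Rightarrow> real \<Rightarrow> real" where
  "psi_t t x = psi (x / t) / t"

definition nt_max :: "(real \<Rightarrow> real) \<Rightarrow> real \<Rightarrow> ennreal" where
  "nt_max f x = Sup {ennreal \<bar>LINT z|lborel. psi_t t (y - z) * f z\<bar> | t y. t > 0 \<and> \<bar>x - y\<bar> \<le> t}"

definition loc_int :: "(real \<Rightarrow> real) \<Rightarrow> bool" where
  "loc_int f \<longleftrightarrow> f \<in> borel_measurable borel \<and> (\<forall>a b. set_integrable lborel {a..b} f)"

text \<open>Locally integrable elements of \<open>H^p(w)\<close> (with polynomial growth, so that they are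
  tempered distributions).\<close>
definition Hp_loc :: "real \<Rightarrow> (real \<Rightarrow> real) \<Rightarrow> (real \<Rightarrow> real) \<Rightarrow> bool" where
  "Hp_loc p w f \<longleftrightarrow> loc_int f \<and>
     (\<exists>N::nat. integrable lborel (\<lambda>x. f x / (1 + \<bar>x\<bar>) ^ N)) \<and>
     wnorm p w (nt_max f) < top"

text \<open>Decomposition \<open>s = m + \<delta>\<close>, \<open>m \<in> \<nat>\<close>, \<open>\<delta> \<in> (0,1]\<close>.\<close>
definition s_int :: "real \<Rightarrow> nat" where
  "s_int s = nat (\<lceil>s\<rceil> - 1)"

definition s_frac :: "real \<Rightarrow> real" where
  "s_frac s = s - real (s_int s)"

definition Fs :: "real \<Rightarrow> real \<Rightarrow> real \<Rightarrow> (real \<Rightarrow> real) set" where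
  "Fs s a b = {\<phi>. (\<forall>y. y \<notin> {a..b} \<longrightarrow> \<phi> y = 0) \<and>
     (\<forall>k < s_int s. \<forall>y. ((deriv ^^ k) \<phi> has_real_derivative (deriv ^^ Suc k) \<phi> y) (at y)) \<and>
     (\<forall>k \<le> s_int s. \<forall>y. \<bar>(deriv ^^ k) \<phi> y\<bar> \<le> (b - a) powr (- real k)) \<and>
     (\<forall>y y'. \<bar>(deriv ^^ s_int s) \<phi> y - (deriv ^^ s_int s) \<phi> y'\<bar>
              \<le> \<bar>y - y'\<bar> powr s_frac s * (b - a) powr (- s))}"

definition Ms :: "real \<Rightarrow> (real \<Rightarrow> real) \<Rightarrow> real \<Rightarrow> ennreal" where
  "Ms s f x = Sup {ennreal (\<bar>LINT y:{a..b}|lborel. f y * \<phi> y\<bar> / (b - a)) | a b \<phi>.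
                    a < b \<and> x \<in> {a..b} \<and> \<phi> \<in> Fs s a b}"

definition hilbert_pv :: "(real \<Rightarrow> real) \<Rightarrow> real \<Rightarrow> real \<Rightarrow> bool" where
  "hilbert_pv f x L \<longleftrightarrow>
     ((\<lambda>\<epsilon>. (1 / pi) * (LINT y:{y. \<epsilon> < \<bar>x - y\<bar> \<and> \<bar>x - y\<bar> < 1 / \<epsilon>}|lborel. f y / (x - y)))
        \<longlongrightarrow> L) (at_right 0)"

definition is_hilbert :: "(real \<Rightarrow> real) \<Rightarrow> (real \<Rightarrow> real) \<Rightarrow> bool" where
  "is_hilbert f g \<longleftrightarrow> g \<in> borel_measurable borel \<and> (AE x in lborel. hilbert_pv f x (g x))"

end

theory Submission
  imports Defs "HOL-Probability.Distributions"
begin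

lemma enn_powr_le:
  assumes "0 \<le> m" "0 < p" "x \<le> ennreal m"
  shows "enn_powr x p \<le> ennreal (m powr p)"
proof -
  have "x \<noteq> top" using assms(3) by (auto simp: top_unique)
  moreover have "enn2real x \<le> m" using assms by (intro enn2real_leI) auto
  ultimately show ?thesis using assms
    by (auto simp: enn_powr_def intro!: ennreal_leI powr_mono2)
qed

lemma enn_powr_ge:
  assumes "0 \<le> m" "0 < p" "ennreal m \<le> x"
  shows "ennreal (m powr p) \<le> enn_powr x p"
proof (cases "x = top")
  case True then show ?thesis by (simp add: enn_powr_def)
next
  case False
  have "ennreal m \<le> ennreal (enn2real x)" using assms False by (simp add: ennreal_enn2real_if)
  then have "m \<le> enn2real x" using assms(1) enn2real_nonneg[of x] by (auto simp add: ennreal_le_iff2)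
  then show ?thesis using assms False
    by (auto simp: enn_powr_def intro!: ennreal_leI powr_mono2)
qed

lemma even_nn_int:
  fixes h :: "real \<Rightarrow> ennreal"
  assumes [measurable]: "h \<in> borel_measurable borel"
  shows "(\<integral>\<^sup>+x. h \<bar>x\<bar> \<partial>lborel) \<le> 2 * (\<integral>\<^sup>+x. h x * indicator {0..} x \<partial>lborel)"
proof -
  have "(\<integral>\<^sup>+x. h \<bar>x\<bar> \<partial>lborel) \<le> (\<integral>\<^sup>+x. h x * indicator {0..} x + h (-x) * indicator {0..} (-x) \<partial>lborel)"
    by (intro nn_integral_mono) (auto simp: indicator_def)
  also have "\<dots> = (\<integral>\<^sup>+x. h x * indicator {0..} x \<partial>lborel) + (\<integral>\<^sup>+x. h (-x) * indicator {0..} (-x) \<partial>lborel)"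
    by (intro nn_integral_add) auto
  also have "(\<integral>\<^sup>+x. h (-x) * indicator {0..} (-x) \<partial>lborel) = (\<integral>\<^sup>+x. h x * indicator {0..} x \<partial>lborel)"
    using nn_integral_real_affine[of "\<lambda>x. h x * indicator {0..} x" "-1" 0] by simp
  finally show ?thesis by (simp add: mult_2)
qed

lemma powr_int0:
  assumes "0 < d" "0 < c"
  shows "(\<integral>\<^sup>+x. ennreal (x powr (d - 1)) * indicator {0..c} x \<partial>lborel) = ennreal (c powr d / d)"
  using nn_integral_has_integral_lebesgue'[OF _ has_integral_powr_from_0[of "d-1" c]] assms by simp

lemma powr_int_inf:
  assumes "e < -1" "0 < c"
  shows "(\<integral>\<^sup>+x. ennreal (x powr e) * indicator {c..} x \<partial>lborel) = ennreal (-(c powr (e+1)) / (e+1))"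
  using nn_integral_has_integral_lebesgue'[OF _ has_integral_powr_to_inf[of e c]] assms by simp

definition Wt :: "real \<Rightarrow> real \<Rightarrow> real" where
  "Wt d x = (if x = 0 then 1 else \<bar>x\<bar> powr (d - 1))"

lemma Wt_pos: "Wt d x > 0" by (simp add: Wt_def)

lemma Wt_meas[measurable]: "Wt d \<in> borel_measurable borel"
  unfolding Wt_def by measurable

lemma wint_bound:
  fixes F :: "real \<Rightarrow> ennreal"
  assumes d: "0 < d" "d < p" and c: "0 < c" and K: "0 \<le> K"
    and F: "\<And>x. F x \<le> ennreal (if \<bar>x\<bar> \<le> c then 1 else K / \<bar>x\<bar>)"
  shows "(\<integral>\<^sup>+x. enn_powr (F x) p * ennreal (Wt d x) \<partial>lborel)
     \<le> ennreal (2 * (c powr d / d + K powr p * (c powr (d - p) / (p - d))))"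
proof -
  define h where "h r = ennreal (r powr (d-1)) * indicator {..c} r
     + ennreal (K powr p * r powr (d-1-p)) * indicator {c<..} r" for r :: real
  have hm[measurable]: "h \<in> borel_measurable borel" unfolding h_def by measurable
  have p: "0 < p" using d by simp
  have pt: "enn_powr (F x) p * ennreal (Wt d x) \<le> h \<bar>x\<bar>" if "x \<noteq> 0" for x
  proof (cases "\<bar>x\<bar> \<le> c")
    case True
    have "enn_powr (F x) p \<le> ennreal (1 powr p)"
      using F[of x] True p by (intro enn_powr_le) auto
    then have "enn_powr (F x) p * ennreal (Wt d x) \<le> ennreal 1 * ennreal (Wt d x)"
      by (intro mult_right_mono) auto
    then show ?thesis using True that by (simp add: h_def Wt_def)
  next
    case False
    have "enn_powr (F x) p \<le> ennreal ((K / \<bar>x\<bar>) powr p)"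
      using F[of x] False p K by (intro enn_powr_le) auto
    then have "enn_powr (F x) p * ennreal (Wt d x) \<le> ennreal ((K / \<bar>x\<bar>) powr p) * ennreal (Wt d x)"
      by (intro mult_right_mono) auto
    also have "\<dots> = ennreal ((K / \<bar>x\<bar>) powr p * \<bar>x\<bar> powr (d - 1))"
      using that by (simp add: Wt_def ennreal_mult)
    also have "(K / \<bar>x\<bar>) powr p * \<bar>x\<bar> powr (d - 1) = K powr p * \<bar>x\<bar> powr (d - 1 - p)"
      using that K by (simp add: powr_divide powr_diff)
    finally show ?thesis using False by (simp add: h_def)
  qed
  have "(\<integral>\<^sup>+x. enn_powr (F x) p * ennreal (Wt d x) \<partial>lborel) \<le> (\<integral>\<^sup>+x. h \<bar>x\<bar> \<partial>lborel)"
    using pt by (intro nn_integral_mono_AE) (auto intro: AE_mp[OF AE_lborel_singleton[of 0]])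
  also have "\<dots> \<le> 2 * (\<integral>\<^sup>+x. h x * indicator {0..} x \<partial>lborel)"
    by (rule even_nn_int) simp
  also have "(\<integral>\<^sup>+x. h x * indicator {0..} x \<partial>lborel) \<le>
     (\<integral>\<^sup>+x. ennreal (x powr (d - 1)) * indicator {0..c} x + ennreal (K powr p) * (ennreal (x powr (d - 1 - p)) * indicator {c..} x) \<partial>lborel)"
    by (intro nn_integral_mono) (auto simp: h_def indicator_def ennreal_mult)
  also have "\<dots> = (\<integral>\<^sup>+x. ennreal (x powr (d - 1)) * indicator {0..c} x \<partial>lborel) + ennreal (K powr p) * (\<integral>\<^sup>+x. ennreal (x powr (d - 1 - p)) * indicator {c..} x \<partial>lborel)"
    by (subst nn_integral_add) (auto simp: nn_integral_cmult)
  also have "\<dots> = ennreal (c powr d / d) + ennreal (K powr p) * ennreal (- (c powr (d - 1 - p + 1)) / (d - 1 - p + 1))"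
    using d c by (simp add: powr_int0 powr_int_inf)
  also have "- (c powr (d - 1 - p + 1)) / (d - 1 - p + 1) = c powr (d - p) / (p - d)"
    by (simp add: minus_divide_right)
  also have "ennreal (K powr p) * ennreal (c powr (d - p) / (p - d)) = ennreal (K powr p * (c powr (d - p) / (p - d)))"
    using d by (intro ennreal_mult[symmetric]) auto
  also have "ennreal (c powr d / d) + ennreal (K powr p * (c powr (d - p) / (p - d))) = ennreal (c powr d / d + K powr p * (c powr (d - p) / (p - d)))"
    using d by (simp add: ennreal_plus)
  also have "2 * ennreal (c powr d / d + K powr p * (c powr (d - p) / (p - d))) = ennreal (2 * (c powr d / d + K powr p * (c powr (d - p) / (p - d))))"
    using d by (subst ennreal_mult) auto
  finally show ?thesis by (simp add: mult_left_mono)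
qed


lemma setint_from_nn:
  fixes g :: "real \<Rightarrow> real"
  assumes [measurable]: "g \<in> borel_measurable borel" and nn: "\<And>x. 0 \<le> g x"
    and S[measurable]: "S \<in> sets borel" and B: "0 \<le> B"
    and fin: "(\<integral>\<^sup>+ x. ennreal (g x) * indicator S x \<partial>lborel) \<le> ennreal B"
  shows "set_integrable lborel S g" and "(LINT x:S|lborel. g x) \<le> B"
proof -
  have eq: "(\<lambda>x. ennreal (norm (indicator S x *\<^sub>R g x))) = (\<lambda>x. ennreal (g x) * indicator S x)"
    using nn by (auto simp: indicator_def)
  show si: "set_integrable lborel S g" unfolding set_integrable_def
    by (rule integrableI_bounded) (use eq fin in \<open>auto simp: top_unique intro: le_less_trans\<close>)
  have eq2: "(\<lambda>x. ennreal (indicator S x *\<^sub>R g x)) = (\<lambda>x. ennreal (g x) * indicator S x)"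
    using nn by (auto simp: indicator_def)
  have "ennreal (LINT x:S|lborel. g x) = (\<integral>\<^sup>+ x. ennreal (indicator S x *\<^sub>R g x) \<partial>lborel)"
    unfolding set_lebesgue_integral_def
    by (rule nn_integral_eq_integral[symmetric]) (use si nn in \<open>auto simp: set_integrable_def\<close>)
  also have "\<dots> \<le> ennreal B" using fin eq2 by simp
  finally show "(LINT x:S|lborel. g x) \<le> B" using B by simp
qed

lemma Wt_int_R:
  assumes d: "0 < d" and R: "0 < R"
  shows "(\<integral>\<^sup>+x. ennreal (Wt d x) * indicator {-R..R} x \<partial>lborel) \<le> ennreal (2 * (R powr d / d))"
proof -
  define h where "h r = ennreal (r powr (d-1)) * indicator {..R} r" for r :: real
  have [measurable]: "h \<in> borel_measurable borel" unfolding h_def by measurable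
  have "(\<integral>\<^sup>+x. ennreal (Wt d x) * indicator {-R..R} x \<partial>lborel) = (\<integral>\<^sup>+x. h \<bar>x\<bar> \<partial>lborel)"
    by (intro nn_integral_cong_AE, rule AE_mp[OF AE_lborel_singleton[of 0]])
       (auto simp: h_def Wt_def indicator_def)
  also have "\<dots> \<le> 2 * (\<integral>\<^sup>+x. h x * indicator {0..} x \<partial>lborel)"
    by (rule even_nn_int) simp
  also have "(\<integral>\<^sup>+x. h x * indicator {0..} x \<partial>lborel) = (\<integral>\<^sup>+x. ennreal (x powr (d - 1)) * indicator {0..R} x \<partial>lborel)"
    by (intro nn_integral_cong) (auto simp: h_def indicator_def)
  also have "\<dots> = ennreal (R powr d / d)" using d R by (simp add: powr_int0)
  also have "2 * ennreal (R powr d / d) = ennreal (2 * (R powr d / d))"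
    using d by (subst ennreal_mult) auto
  finally show ?thesis by simp
qed

lemma Wt_setint: "0 < d \<Longrightarrow> set_integrable lborel {a..b} (Wt d)"
proof -
  assume d: "0 < d"
  define R where "R = max \<bar>a\<bar> \<bar>b\<bar> + 1"
  have R: "0 < R" unfolding R_def by simp
  have "(\<integral>\<^sup>+x. ennreal (Wt d x) * indicator {a..b} x \<partial>lborel) \<le> (\<integral>\<^sup>+x. ennreal (Wt d x) * indicator {-R..R} x \<partial>lborel)"
    by (intro nn_integral_mono) (auto simp: indicator_def R_def)
  also have "\<dots> \<le> ennreal (2 * (R powr d / d))" using Wt_int_R[OF d R] .
  finally show ?thesis
    by (intro setint_from_nn(1)[where B="2 * (R powr d / d)"]) (use d Wt_pos in \<open>auto intro: less_imp_le\<close>)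
qed

definition Vt :: "real \<Rightarrow> real \<Rightarrow> real \<Rightarrow> real" where
  "Vt q d x = Wt d x powr (-1 / (q - 1))"

lemma Vt_meas[measurable]: "Vt q d \<in> borel_measurable borel"
  unfolding Vt_def by measurable

lemma Vt_nonneg: "0 \<le> Vt q d x" by (simp add: Vt_def)

lemma Vt_le:
  assumes "q > 1" "d \<le> 1" "x \<noteq> 0" "\<bar>x\<bar> \<le> R"
  shows "Vt q d x \<le> R powr ((1 - d) / (q - 1))"
proof -
  have "Vt q d x = \<bar>x\<bar> powr ((d - 1) * (-1 / (q - 1)))"
    using assms by (simp add: Vt_def Wt_def powr_powr)
  also have "(d - 1) * (-1 / (q - 1)) = (1 - d) / (q - 1)"
    using assms(1) by (simp add: field_simps)
  also have "\<bar>x\<bar> powr ((1 - d) / (q - 1)) \<le> R powr ((1 - d) / (q - 1))"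
    using assms by (intro powr_mono2) auto
  finally show ?thesis .
qed

lemma Vt_setint:
  assumes "q > 1" "d \<le> 1"
  shows "set_integrable lborel {a..b} (Vt q d)"
proof -
  define R where "R = max \<bar>a\<bar> \<bar>b\<bar>"
  define M where "M = max 1 (R powr ((1 - d) / (q - 1)))"
  have "Vt q d x \<le> M" if "x \<in> {a..b}" for x
  proof (cases "x = 0")
    case True then show ?thesis by (simp add: Vt_def Wt_def M_def)
  next
    case False
    have "\<bar>x\<bar> \<le> R" using that unfolding R_def by (cases "x \<ge> 0") auto
    then show ?thesis using Vt_le[OF assms False, of R] unfolding M_def by linarith
  qed
  then have "(\<integral>\<^sup>+x. ennreal (Vt q d x) * indicator {a..b} x \<partial>lborel) \<le> (\<integral>\<^sup>+x. ennreal M * indicator {a..b} x \<partial>lborel)"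
    by (intro nn_integral_mono) (auto simp: indicator_def intro!: ennreal_leI)
  also have "\<dots> = ennreal M * ennreal (if a \<le> b then b - a else 0)"
    by (simp add: nn_integral_cmult_indicator emeasure_lborel_Icc_eq)
  also have "\<dots> = ennreal (M * (if a \<le> b then b - a else 0))"
    unfolding M_def by (subst ennreal_mult) auto
  finally show ?thesis
    by (intro setint_from_nn(1)[where B="M * (if a \<le> b then b - a else 0)"]) (auto simp: Vt_nonneg M_def)
qed


lemma avg_nonneg: "(\<And>x. 0 \<le> g x) \<Longrightarrow> a < b \<Longrightarrow> 0 \<le> avg g a b"
  unfolding avg_def set_lebesgue_integral_def
  by (intro divide_nonneg_pos integral_nonneg_AE) (auto simp: indicator_def)

lemma Aq_val_bound:
  assumes d: "0 < d" "d \<le> 1" and q: "q > 1" and ab: "a < b"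
  shows "avg (Wt d) a b * avg (Vt q d) a b powr (q - 1) \<le> 4 / d"
proof -
  define R where "R = max \<bar>a\<bar> \<bar>b\<bar>"
  define \<beta> where "\<beta> = (1 - d) / (q - 1)"
  have R: "0 < R" using ab unfolding R_def by auto
  have xR: "\<bar>x\<bar> \<le> R" if "x \<in> {a..b}" for x
    using that unfolding R_def by (cases "x \<ge> 0") auto
  have ba: "0 < b - a" using ab by simp
  have "(\<integral>\<^sup>+x. ennreal (Vt q d x) * indicator {a..b} x \<partial>lborel) \<le> (\<integral>\<^sup>+x. ennreal (R powr \<beta>) * indicator {a..b} x \<partial>lborel)"
    by (intro nn_integral_mono_AE, rule AE_mp[OF AE_lborel_singleton[of 0]])
       (auto simp: indicator_def \<beta>_def intro!: ennreal_leI Vt_le[OF q d(2)] xR)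
  also have "\<dots> = ennreal (R powr \<beta> * (b - a))"
    using ab by (simp add: nn_integral_cmult_indicator ennreal_mult)
  finally have "(LINT x:{a..b}|lborel. Vt q d x) \<le> R powr \<beta> * (b - a)"
    by (intro setint_from_nn(2)) (use ab in \<open>auto simp: Vt_nonneg\<close>)
  then have avV: "avg (Vt q d) a b \<le> R powr \<beta>"
    unfolding avg_def using ba by (simp add: divide_le_eq)
  have avV0: "0 \<le> avg (Vt q d) a b" using ab by (intro avg_nonneg) (simp add: Vt_nonneg)
  have "avg (Vt q d) a b powr (q - 1) \<le> (R powr \<beta>) powr (q - 1)"
    using avV avV0 q by (intro powr_mono2) auto
  also have "\<dots> = R powr (1 - d)"
    using q by (simp add: powr_powr \<beta>_def)
  finally have PV: "avg (Vt q d) a b powr (q - 1) \<le> R powr (1 - d)" .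
  have PV0: "0 \<le> avg (Vt q d) a b powr (q - 1)" by simp
  have avW0: "0 \<le> avg (Wt d) a b" using ab by (intro avg_nonneg) (simp add: Wt_pos less_imp_le)
  show ?thesis
  proof (cases "R / 2 \<le> b - a")
    case True
    have sub: "{a..b} \<subseteq> {-R..R}"
    proof
      fix x assume "x \<in> {a..b}"
      then have "\<bar>x\<bar> \<le> R" by (rule xR)
      then show "x \<in> {-R..R}" by (simp add: abs_le_iff)
    qed
    have "(\<integral>\<^sup>+x. ennreal (Wt d x) * indicator {a..b} x \<partial>lborel) \<le> (\<integral>\<^sup>+x. ennreal (Wt d x) * indicator {-R..R} x \<partial>lborel)"
      using sub by (intro nn_integral_mono) (auto simp: indicator_def)
    also have "\<dots> \<le> ennreal (2 * (R powr d / d))" using Wt_int_R[OF d(1) R] .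
    finally have "(LINT x:{a..b}|lborel. Wt d x) \<le> 2 * (R powr d / d)"
      by (intro setint_from_nn(2)) (use d Wt_pos in \<open>auto intro: less_imp_le\<close>)
    then have "avg (Wt d) a b \<le> 2 * (R powr d / d) / (b - a)"
      unfolding avg_def using ba by (intro divide_right_mono) auto
    also have "\<dots> \<le> 2 * (R powr d / d) / (R / 2)"
      using True R d by (intro divide_left_mono) auto
    finally have avW: "avg (Wt d) a b \<le> 2 * (R powr d / d) / (R / 2)" .
    have "avg (Wt d) a b * avg (Vt q d) a b powr (q - 1) \<le> 2 * (R powr d / d) / (R / 2) * R powr (1 - d)"
      using avW PV avW0 PV0 by (intro mult_mono) auto
    also have "\<dots> = 4 / d * (R powr d * R powr (1 - d) / R)"
      by (simp add: field_simps)
    also have "R powr d * R powr (1 - d) = R"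
      using R by (simp add: powr_add[symmetric])
    finally show ?thesis using R by simp
  next
    case False
    have big: "R / 2 \<le> \<bar>x\<bar>" if "x \<in> {a..b}" for x
      using that False unfolding R_def by (cases "x \<ge> 0"; cases "a \<ge> 0"; cases "b \<ge> 0") auto
    have Wle: "Wt d x \<le> (R / 2) powr (d - 1)" if "x \<in> {a..b}" for x
    proof -
      have "x \<noteq> 0" using big[OF that] R by auto
      then have "Wt d x = \<bar>x\<bar> powr (d - 1)" by (simp add: Wt_def)
      also have "\<dots> \<le> (R / 2) powr (d - 1)"
        using big[OF that] R d by (intro powr_mono2') auto
      finally show ?thesis .
    qed
    have "(\<integral>\<^sup>+x. ennreal (Wt d x) * indicator {a..b} x \<partial>lborel) \<le> (\<integral>\<^sup>+x. ennreal ((R / 2) powr (d - 1)) * indicator {a..b} x \<partial>lborel)"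
      using Wle by (intro nn_integral_mono) (auto simp: indicator_def intro!: ennreal_leI)
    also have "\<dots> = ennreal ((R / 2) powr (d - 1) * (b - a))"
      using ab by (simp add: nn_integral_cmult_indicator ennreal_mult)
    finally have "(LINT x:{a..b}|lborel. Wt d x) \<le> (R / 2) powr (d - 1) * (b - a)"
      by (intro setint_from_nn(2)) (use ab Wt_pos in \<open>auto intro: less_imp_le\<close>)
    then have avW: "avg (Wt d) a b \<le> (R / 2) powr (d - 1)"
      unfolding avg_def using ba by (simp add: divide_le_eq)
    have "avg (Wt d) a b * avg (Vt q d) a b powr (q - 1) \<le> (R / 2) powr (d - 1) * R powr (1 - d)"
      using avW PV avW0 PV0 by (intro mult_mono) auto
    also have "\<dots> = 2 powr (1 - d) * (R powr (d - 1) * R powr (1 - d))"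
      using R by (simp add: powr_divide powr_diff field_simps)
    also have "R powr (d - 1) * R powr (1 - d) = 1"
      using R by (simp add: powr_add[symmetric])
    also have "2 powr (1 - d) \<le> (2::real) powr 1"
      using d by (intro powr_mono) auto
    also have "(2::real) powr 1 \<le> 4 / d"
      using d by (simp add: field_simps)
    finally show ?thesis by simp
  qed
qed

lemma Wt_Aq:
  assumes d: "0 < d" "d \<le> 1" and q: "q > 1"
  shows "in_Aq q (Wt d)" "Aq_const q (Wt d) \<le> 4 / d" "0 \<le> Aq_const q (Wt d)"
proof -
  have V: "(\<lambda>x. Wt d x powr (-1 / (q - 1))) = Vt q d" by (simp add: Vt_def fun_eq_iff)
  have le: "y \<le> 4 / d" if "y \<in> Aq_vals q (Wt d)" for y
    using that Aq_val_bound[OF d q] unfolding Aq_vals_def V by auto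
  have mem: "avg (Wt d) 0 1 * avg (Vt q d) 0 1 powr (q - 1) \<in> Aq_vals q (Wt d)"
    unfolding Aq_vals_def V by (intro CollectI exI[of _ 0] exI[of _ 1]) simp
  have bdd: "bdd_above (Aq_vals q (Wt d))" using le by (auto simp: bdd_above_def)
  show "in_Aq q (Wt d)"
    unfolding in_Aq_def is_weight_def V
    using Wt_pos Wt_setint[OF d(1)] Vt_setint[OF q d(2)] bdd by auto
  show "Aq_const q (Wt d) \<le> 4 / d"
    unfolding Aq_const_def using mem le by (intro cSup_least) auto
  have "0 \<le> avg (Wt d) 0 1 * avg (Vt q d) 0 1 powr (q - 1)"
    by (intro mult_nonneg_nonneg avg_nonneg) (auto simp: Wt_pos less_imp_le)
  also have "\<dots> \<le> Aq_const q (Wt d)"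
    unfolding Aq_const_def using mem bdd by (intro cSup_upper)
  finally show "0 \<le> Aq_const q (Wt d)" .
qed


definition f0 :: "real \<Rightarrow> real" where "f0 = indicator {0..1}"

lemma f0_meas[measurable]: "f0 \<in> borel_measurable borel" unfolding f0_def by measurable

lemma abs_int_le:
  fixes g :: "real \<Rightarrow> real"
  shows "ennreal \<bar>integral\<^sup>L lborel g\<bar> \<le> (\<integral>\<^sup>+ y. ennreal \<bar>g y\<bar> \<partial>lborel)"
proof (cases "integrable lborel g")
  case True
  then show ?thesis using integral_norm_bound_ennreal[OF True] by simp
next
  case False
  then show ?thesis by (simp add: not_integrable_integral_eq)
qed

lemma Fs_bound1:
  assumes "\<phi> \<in> Fs s a b" "a < b"
  shows "\<bar>\<phi> y\<bar> \<le> 1"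
proof -
  have "\<forall>k \<le> s_int s. \<forall>y. \<bar>(deriv ^^ k) \<phi> y\<bar> \<le> (b - a) powr (- real k)"
    using assms(1) unfolding Fs_def by blast
  then have "\<bar>(deriv ^^ 0) \<phi> y\<bar> \<le> (b - a) powr (- real (0::nat))" by blast
  then show ?thesis using assms(2) by simp
qed

lemma Ms_bound: "Ms s f0 x \<le> ennreal (if \<bar>x\<bar> \<le> 2 then 1 else 2 / \<bar>x\<bar>)"
  unfolding Ms_def
proof (intro Sup_least, clarify)
  fix a b \<phi> assume ab: "a < b" and x: "x \<in> {a..b}" and phi: "\<phi> \<in> Fs s a b"
  define I where "I = (LINT y:{a..b}|lborel. f0 y * \<phi> y)"
  have ba: "0 < b - a" using ab by simp
  have ptw: "ennreal \<bar>indicator {a..b} y *\<^sub>R (f0 y * \<phi> y)\<bar> \<le> indicator ({a..b} \<inter> {0..1}) y" for y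
    using Fs_bound1[OF phi ab, of y] by (auto simp: f0_def indicator_def abs_mult)
  have I: "ennreal \<bar>I\<bar> \<le> (\<integral>\<^sup>+ y. indicator ({a..b} \<inter> {0..1}) y \<partial>lborel)"
    unfolding I_def set_lebesgue_integral_def
    by (rule order.trans[OF abs_int_le]) (intro nn_integral_mono ptw)
  have b1: "\<bar>I\<bar> / (b - a) \<le> 1"
  proof -
    have "ennreal \<bar>I\<bar> \<le> (\<integral>\<^sup>+ y. indicator {a..b} y \<partial>lborel)"
      by (rule order.trans[OF I]) (intro nn_integral_mono, auto simp: indicator_def)
    also have "\<dots> = ennreal (b - a)" using ab by simp
    finally have "\<bar>I\<bar> \<le> b - a" using ba by simp
    then show ?thesis using ba by simp
  qed
  show "ennreal (\<bar>I\<bar> / (b - a)) \<le> ennreal (if \<bar>x\<bar> \<le> 2 then 1 else 2 / \<bar>x\<bar>)"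
  proof (cases "\<bar>x\<bar> \<le> 2")
    case True then show ?thesis using b1 by (simp add: I_def)
  next
    case False
    show ?thesis
    proof (cases "{a..b} \<inter> {0..1} = {}")
      case True
      then have "ennreal \<bar>I\<bar> \<le> 0" using I by simp
      then have "I = 0" by simp
      then show ?thesis by (simp add: I_def)
    next
      case ne: False
      then obtain y where "y \<in> {a..b} \<inter> {0..1}" by blast
      then have y: "y \<in> {a..b}" "y \<in> {0..1}" by auto
      have "\<bar>x\<bar> / 2 \<le> b - a" using x y False by auto
      have "(\<integral>\<^sup>+ y. indicator ({a..b} \<inter> {0..1}) y \<partial>lborel) \<le> (\<integral>\<^sup>+ y. indicator {0..1::real} y \<partial>lborel)"
        using emeasure_mono[of "{a..b} \<inter> {0..1}" "{0..1::real}" lborel] by simp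
      then have "ennreal \<bar>I\<bar> \<le> (\<integral>\<^sup>+ y. indicator {0..1::real} y \<partial>lborel)"
        using I by (rule order.trans[rotated])
      also have "\<dots> = ennreal 1" by simp
      finally have "\<bar>I\<bar> \<le> 1" by simp
      then have "\<bar>I\<bar> / (b - a) \<le> 1 / (\<bar>x\<bar> / 2)"
        using \<open>\<bar>x\<bar> / 2 \<le> b - a\<close> False ba by (intro frac_le) auto
      then show ?thesis using False by (simp add: I_def)
    qed
  qed
qed


lemma psi_nd: "0 < t \<Longrightarrow> psi_t t (y - z) = normal_density y (t / sqrt (2*pi)) z"
proof -
  assume t: "0 < t"
  have s: "(t / sqrt (2*pi))\<^sup>2 = t\<^sup>2 / (2 * pi)" by (simp add: power_divide)
  have "sqrt (2 * pi * (t / sqrt (2*pi))\<^sup>2) = t" using t by (simp add: s)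
  moreover have "- (z - y)\<^sup>2 / (2 * (t / sqrt (2*pi))\<^sup>2) = - pi * ((y - z) / t)\<^sup>2"
    using t by (simp add: s power_divide power2_commute field_simps)
  ultimately show ?thesis
    by (simp add: psi_t_def psi_def normal_density_def)
qed

lemma psi_nonneg: "0 < t \<Longrightarrow> 0 \<le> psi_t t v"
  by (simp add: psi_t_def psi_def)

lemma psi_le: "0 < t \<Longrightarrow> psi_t t v \<le> 1 / t"
  by (simp add: psi_t_def psi_def divide_right_mono)

lemma exp_neg_le: "0 < (w::real) \<Longrightarrow> exp (- w) \<le> 1 / w"
proof -
  assume w: "0 < w"
  have "w \<le> exp w" using exp_ge_add_one_self[of w] by linarith
  then show ?thesis using w by (simp add: exp_minus field_simps)
qed

lemma psi_decay:
  assumes t: "0 < t" and v: "v \<noteq> 0"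
  shows "psi_t t v \<le> t / (pi * v\<^sup>2)"
proof -
  have w: "0 < pi * (v / t)\<^sup>2" using t v by simp
  have "psi_t t v = exp (- (pi * (v / t)\<^sup>2)) / t" by (simp add: psi_t_def psi_def)
  also have "\<dots> \<le> (1 / (pi * (v / t)\<^sup>2)) / t"
    using exp_neg_le[OF w] t by (intro divide_right_mono) auto
  also have "\<dots> = t / (pi * v\<^sup>2)" using t v by (simp add: power_divide field_simps power2_eq_square)
  finally show ?thesis .
qed

lemma nt_max_bound: "nt_max f0 x \<le> ennreal (if \<bar>x\<bar> \<le> 4 then 1 else 8 / \<bar>x\<bar>)"
  unfolding nt_max_def
proof (intro Sup_least, clarify)
  fix t y assume t: "0 < t" and xy: "\<bar>x - y\<bar> \<le> t"
  define I where "I = (LINT z|lborel. psi_t t (y - z) * f0 z)"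
  have eqp: "ennreal \<bar>psi_t t (y - z) * f0 z\<bar> = ennreal (psi_t t (y - z)) * indicator {0..1} z" for z
    using psi_nonneg[OF t] by (auto simp: f0_def indicator_def)
  have I: "ennreal \<bar>I\<bar> \<le> (\<integral>\<^sup>+ z. ennreal (psi_t t (y - z)) * indicator {0..1} z \<partial>lborel)"
    unfolding I_def using abs_int_le[of "\<lambda>z. psi_t t (y - z) * f0 z"] eqp by simp
  have B1: "\<bar>I\<bar> \<le> 1"
  proof -
    have "(\<integral>\<^sup>+ z. ennreal (psi_t t (y - z)) * indicator {0..1} z \<partial>lborel) \<le> (\<integral>\<^sup>+ z. ennreal (normal_density y (t / sqrt (2*pi)) z) \<partial>lborel)"
      using t by (intro nn_integral_mono) (auto simp: psi_nd indicator_def)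
    also have "\<dots> = ennreal 1"
      using t by (subst nn_integral_eq_integral) (auto intro!: integrable_normal_density simp: integral_normal_density)
    finally have "ennreal \<bar>I\<bar> \<le> ennreal 1" using I by (rule order.trans[rotated])
    then show ?thesis by (subst (asm) ennreal_le_iff) auto
  qed
  show "ennreal \<bar>I\<bar> \<le> ennreal (if \<bar>x\<bar> \<le> 4 then 1 else 8 / \<bar>x\<bar>)"
  proof (cases "\<bar>x\<bar> \<le> 4")
    case True then show ?thesis using B1 by simp
  next
    case False
    have pb: "psi_t t (y - z) \<le> 8 / \<bar>x\<bar>" if z: "z \<in> {0..1}" for z
    proof (cases "\<bar>x\<bar> / 2 \<le> t")
      case True
      have "psi_t t (y - z) \<le> 1 / t" by (rule psi_le[OF t])
      also have "\<dots> \<le> 1 / (\<bar>x\<bar> / 2)" using True False by (intro divide_left_mono) auto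
      also have "\<dots> \<le> 8 / \<bar>x\<bar>" using False by (simp add: field_simps)
      finally show ?thesis .
    next
      case tl: False
      have t1: "\<bar>x\<bar> \<le> \<bar>x - y\<bar> + \<bar>y\<bar>" by (metis abs_triangle_ineq diff_add_cancel)
      have t2: "\<bar>y\<bar> \<le> \<bar>y - z\<bar> + \<bar>z\<bar>" by (metis abs_triangle_ineq diff_add_cancel)
      have t3: "\<bar>z\<bar> \<le> 1" using z by auto
      have u: "\<bar>x\<bar> / 4 \<le> \<bar>y - z\<bar>" using t1 t2 t3 xy tl False by linarith
      have yz: "y - z \<noteq> 0" using u False by auto
      have "psi_t t (y - z) \<le> t / (pi * (y - z)\<^sup>2)" by (rule psi_decay[OF t yz])
      also have "\<dots> \<le> (\<bar>x\<bar> / 2) / (1 * (\<bar>x\<bar> / 4)\<^sup>2)"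
      proof (intro frac_le)
        show "0 \<le> \<bar>x\<bar> / 2" by simp
        show "t \<le> \<bar>x\<bar> / 2" using tl by simp
        show "0 < 1 * (\<bar>x\<bar> / 4)\<^sup>2" using False by simp
        have "(\<bar>x\<bar> / 4)\<^sup>2 \<le> (y - z)\<^sup>2"
          using u False by (metis abs_ge_zero abs_le_square_iff abs_divide abs_abs abs_numeral)
        also have "\<dots> \<le> pi * (y - z)\<^sup>2" using pi_gt3 mult_right_mono[of 1 pi "(y - z)\<^sup>2"] by simp
        finally show "1 * (\<bar>x\<bar> / 4)\<^sup>2 \<le> pi * (y - z)\<^sup>2" by simp
      qed
      also have "\<dots> = 8 / \<bar>x\<bar>" using False by (simp add: power2_eq_square field_simps)
      finally show ?thesis .
    qed
    have "(\<integral>\<^sup>+ z. ennreal (psi_t t (y - z)) * indicator {0..1} z \<partial>lborel) \<le> (\<integral>\<^sup>+ z. ennreal (8 / \<bar>x\<bar>) * indicator {0..1::real} z \<partial>lborel)"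
      using pb by (intro nn_integral_mono) (auto simp: indicator_def intro!: ennreal_leI)
    also have "\<dots> = ennreal (8 / \<bar>x\<bar>)" by (simp add: nn_integral_cmult_indicator)
    finally have "ennreal \<bar>I\<bar> \<le> ennreal (8 / \<bar>x\<bar>)" using I by (rule order.trans[rotated])
    then show ?thesis using False by simp
  qed
qed

lemma Hp_f0:
  assumes d: "0 < d" "d < p"
  shows "Hp_loc p (Wt d) f0"
proof -
  have si: "set_integrable lborel {a..b} f0" for a b
  proof (rule setint_from_nn(1)[where B=1])
    show "(\<integral>\<^sup>+ x. ennreal (f0 x) * indicator {a..b} x \<partial>lborel) \<le> ennreal 1"
    proof -
      have "(\<integral>\<^sup>+ x. ennreal (f0 x) * indicator {a..b} x \<partial>lborel) \<le> (\<integral>\<^sup>+ x. indicator {0..1::real} x \<partial>lborel)"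
        by (intro nn_integral_mono) (auto simp: f0_def indicator_def)
      then show ?thesis by simp
    qed
  qed (auto simp: f0_def)
  have int: "integrable lborel (\<lambda>x. f0 x / (1 + \<bar>x\<bar>) ^ 0)"
    by (simp add: f0_def)
  have "(\<integral>\<^sup>+x. enn_powr (nt_max f0 x) p * ennreal (Wt d x) \<partial>lborel)
     \<le> ennreal (2 * (4 powr d / d + 8 powr p * (4 powr (d - p) / (p - d))))"
    by (rule wint_bound[OF d]) (auto simp: nt_max_bound)
  then have "(\<integral>\<^sup>+x. enn_powr (nt_max f0 x) p * ennreal (Wt d x) \<partial>lborel) \<noteq> top"
    by (auto simp: top_unique)
  then have "wnorm p (Wt d) (nt_max f0) < top"
    unfolding wnorm_def enn_powr_def by simp
  then show ?thesis
    unfolding Hp_loc_def loc_int_def using si int by (auto intro!: exI[of _ 0])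
qed


lemma setint_cont:
  fixes c e x :: real
  assumes "c \<le> e" "\<And>y. y \<in> {c..e} \<Longrightarrow> x \<noteq> y"
  shows "set_integrable lborel {c..e} (\<lambda>y. 1 / (x - y))"
proof -
  have "\<forall>y\<in>{c..e}. x - y \<noteq> 0" using assms(2) by auto
  then have "continuous_on {c..e} (\<lambda>y. 1 / (x - y))"
    by (intro continuous_intros) auto
  then show ?thesis unfolding set_integrable_def
    by (intro borel_integrable_compact) auto
qed

lemma int_right:
  fixes c e x :: real
  assumes ce: "c \<le> e" and ex: "e < x"
  shows "(LINT y:{c..e}|lborel. 1 / (x - y)) = ln (x - c) - ln (x - e)"
proof -
  have si: "set_integrable lborel {c..e} (\<lambda>y. 1 / (x - y))"
    using assms by (intro setint_cont) auto
  have "((\<lambda>y. 1 / (x - y)) has_integral ((- ln (x - e)) - (- ln (x - c)))) {c..e}"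
  proof (rule fundamental_theorem_of_calculus[OF ce])
    fix y assume y: "y \<in> {c..e}"
    then have "0 < x - y" using ex by auto
    then show "((\<lambda>y. - ln (x - y)) has_vector_derivative 1 / (x - y)) (at y within {c..e})"
      unfolding has_real_derivative_iff_has_vector_derivative[symmetric]
      by (auto intro!: derivative_eq_intros simp: field_simps)
  qed
  then show ?thesis using set_borel_integral_eq_integral(2)[OF si]
    by (simp add: integral_unique)
qed

lemma int_left:
  fixes c e x :: real
  assumes ce: "c \<le> e" and xc: "x < c"
  shows "(LINT y:{c..e}|lborel. 1 / (x - y)) = ln (c - x) - ln (e - x)"
proof -
  have si: "set_integrable lborel {c..e} (\<lambda>y. 1 / (x - y))"
    using assms by (intro setint_cont) auto
  have "((\<lambda>y. 1 / (x - y)) has_integral ((- ln (e - x)) - (- ln (c - x)))) {c..e}"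
  proof (rule fundamental_theorem_of_calculus[OF ce])
    fix y assume y: "y \<in> {c..e}"
    then have "0 < y - x" using xc by auto
    then show "((\<lambda>y. - ln (y - x)) has_vector_derivative 1 / (x - y)) (at y within {c..e})"
      unfolding has_real_derivative_iff_has_vector_derivative[symmetric]
      by (auto intro!: derivative_eq_intros simp: field_simps)
  qed
  then show ?thesis using set_borel_integral_eq_integral(2)[OF si]
    by (simp add: integral_unique)
qed

definition G :: "real \<Rightarrow> real" where "G x = (ln \<bar>x\<bar> - ln \<bar>x - 1\<bar>) / pi"

lemma G_meas[measurable]: "G \<in> borel_measurable borel"
  unfolding G_def by measurable

lemma pv_val:
  fixes x :: real
  assumes x0: "x \<noteq> 0" and x1: "x \<noteq> 1"
  shows "\<exists>e0>0. \<forall>\<epsilon>. 0 < \<epsilon> \<and> \<epsilon> < e0 \<longrightarrow>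
     (LINT y:{y. \<epsilon> < \<bar>x - y\<bar> \<and> \<bar>x - y\<bar> < 1 / \<epsilon>}|lborel. f0 y / (x - y)) = ln \<bar>x\<bar> - ln \<bar>x - 1\<bar>"
proof (cases "x > 1")
  case True
  show ?thesis
  proof (intro exI[of _ "min (x - 1) (1 / (x + 1))"] conjI allI impI)
    show "0 < min (x - 1) (1 / (x + 1))" using True by simp
    fix \<epsilon> assume e: "0 < \<epsilon> \<and> \<epsilon> < min (x - 1) (1 / (x + 1))"
    have "x + 1 < 1 / \<epsilon>" using e True by (simp add: field_simps)
    then have eq: "indicator {y. \<epsilon> < \<bar>x - y\<bar> \<and> \<bar>x - y\<bar> < 1 / \<epsilon>} y *\<^sub>R (f0 y / (x - y))
        = indicator {0..1} y *\<^sub>R (1 / (x - y))" for y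
      using e True by (auto simp: indicator_def f0_def)
    have "(LINT y:{y. \<epsilon> < \<bar>x - y\<bar> \<and> \<bar>x - y\<bar> < 1 / \<epsilon>}|lborel. f0 y / (x - y))
        = (LINT y:{0..1}|lborel. 1 / (x - y))"
      unfolding set_lebesgue_integral_def eq ..
    also have "\<dots> = ln (x - 0) - ln (x - 1)" using True by (intro int_right) auto
    finally show "(LINT y:{y. \<epsilon> < \<bar>x - y\<bar> \<and> \<bar>x - y\<bar> < 1 / \<epsilon>}|lborel. f0 y / (x - y)) = ln \<bar>x\<bar> - ln \<bar>x - 1\<bar>"
      using True by simp
  qed
next
  case F1: False
  show ?thesis
  proof (cases "x < 0")
    case True
    show ?thesis
    proof (intro exI[of _ "min (- x) (1 / (1 - x))"] conjI allI impI)
      show "0 < min (- x) (1 / (1 - x))" using True by simp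
      fix \<epsilon> assume e: "0 < \<epsilon> \<and> \<epsilon> < min (- x) (1 / (1 - x))"
      have "1 - x < 1 / \<epsilon>" using e True by (simp add: field_simps)
      then have eq: "indicator {y. \<epsilon> < \<bar>x - y\<bar> \<and> \<bar>x - y\<bar> < 1 / \<epsilon>} y *\<^sub>R (f0 y / (x - y))
          = indicator {0..1} y *\<^sub>R (1 / (x - y))" for y
        using e True by (auto simp: indicator_def f0_def)
      have "(LINT y:{y. \<epsilon> < \<bar>x - y\<bar> \<and> \<bar>x - y\<bar> < 1 / \<epsilon>}|lborel. f0 y / (x - y))
          = (LINT y:{0..1}|lborel. 1 / (x - y))"
        unfolding set_lebesgue_integral_def eq ..
      also have "\<dots> = ln (0 - x) - ln (1 - x)" using True by (intro int_left) auto
      finally show "(LINT y:{y. \<epsilon> < \<bar>x - y\<bar> \<and> \<bar>x - y\<bar> < 1 / \<epsilon>}|lborel. f0 y / (x - y)) = ln \<bar>x\<bar> - ln \<bar>x - 1\<bar>"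
        using True by simp
    qed
  next
    case False
    then have x01: "0 < x" "x < 1" using x0 x1 F1 by auto
    show ?thesis
    proof (intro exI[of _ "min (min x (1 - x)) (1 / 2)"] conjI allI impI)
      show "0 < min (min x (1 - x)) (1 / 2)" using x01 by simp
      fix \<epsilon> assume e: "0 < \<epsilon> \<and> \<epsilon> < min (min x (1 - x)) (1 / 2)"
      have big: "2 < 1 / \<epsilon>" using e by (simp add: field_simps)
      define S where "S = {y. \<epsilon> < \<bar>x - y\<bar> \<and> \<bar>x - y\<bar> < 1 / \<epsilon>}"
      have eq: "indicator S y *\<^sub>R (f0 y / (x - y))
          = indicator {0..x - \<epsilon>} y *\<^sub>R (1 / (x - y)) + indicator {x + \<epsilon>..1} y *\<^sub>R (1 / (x - y))"
        if yn: "y \<noteq> x - \<epsilon>" "y \<noteq> x + \<epsilon>" for y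
      proof (cases "y \<in> {0..1}")
        case False
        then have "y \<notin> {0..x - \<epsilon>}" "y \<notin> {x + \<epsilon>..1}" using e x01 by auto
        then show ?thesis using False by (simp add: f0_def)
      next
        case True
        have f1: "f0 y = 1" using True by (simp add: f0_def)
        have lt: "\<bar>x - y\<bar> < 1 / \<epsilon>" using True x01 big by (auto simp: abs_if)
        consider "y < x - \<epsilon>" | "x - \<epsilon> < y \<and> y < x + \<epsilon>" | "x + \<epsilon> < y" using yn by linarith
        then show ?thesis
        proof cases
          case 1
          then have "y \<in> S" "y \<in> {0..x - \<epsilon>}" "y \<notin> {x + \<epsilon>..1}" using lt True e by (auto simp: S_def)
          then show ?thesis by (simp add: f1)
        next
          case 2
          then have "y \<notin> S" "y \<notin> {0..x - \<epsilon>}" "y \<notin> {x + \<epsilon>..1}" by (auto simp: S_def abs_if)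
          then show ?thesis by simp
        next
          case 3
          then have "y \<in> S" "y \<notin> {0..x - \<epsilon>}" "y \<in> {x + \<epsilon>..1}" using lt True e by (auto simp: S_def)
          then show ?thesis by (simp add: f1)
        qed
      qed
      have i1: "integrable lborel (\<lambda>y. indicator {0..x - \<epsilon>} y *\<^sub>R (1 / (x - y)))"
        using setint_cont[of 0 "x - \<epsilon>" x] e x01 unfolding set_integrable_def by auto
      have i2: "integrable lborel (\<lambda>y. indicator {x + \<epsilon>..1} y *\<^sub>R (1 / (x - y)))"
        using setint_cont[of "x + \<epsilon>" 1 x] e x01 unfolding set_integrable_def by auto
      have m1: "(\<lambda>y. indicator S y *\<^sub>R (f0 y / (x - y))) \<in> borel_measurable lborel"
        unfolding S_def by measurable
      have m2: "(\<lambda>y. indicator {0..x - \<epsilon>} y *\<^sub>R (1 / (x - y)) + indicator {x + \<epsilon>..1} y *\<^sub>R (1 / (x - y))) \<in> borel_measurable lborel"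
        by measurable
      have ae: "AE y in lborel. indicator S y *\<^sub>R (f0 y / (x - y))
          = indicator {0..x - \<epsilon>} y *\<^sub>R (1 / (x - y)) + indicator {x + \<epsilon>..1} y *\<^sub>R (1 / (x - y))"
        using AE_conjI[OF AE_lborel_singleton[of "x - \<epsilon>"] AE_lborel_singleton[of "x + \<epsilon>"]]
        by (rule AE_mp) (use eq in blast)
      have "(LINT y:S|lborel. f0 y / (x - y))
          = (LINT y|lborel. indicator {0..x - \<epsilon>} y *\<^sub>R (1 / (x - y)) + indicator {x + \<epsilon>..1} y *\<^sub>R (1 / (x - y)))"
        unfolding set_lebesgue_integral_def using m1 m2 ae by (rule integral_cong_AE)
      also have "\<dots> = (LINT y:{0..x - \<epsilon>}|lborel. 1 / (x - y)) + (LINT y:{x + \<epsilon>..1}|lborel. 1 / (x - y))"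
        unfolding set_lebesgue_integral_def using i1 i2 by (rule Bochner_Integration.integral_add)
      also have "(LINT y:{0..x - \<epsilon>}|lborel. 1 / (x - y)) = ln (x - 0) - ln (x - (x - \<epsilon>))"
        using e x01 by (intro int_right) auto
      also have "(LINT y:{x + \<epsilon>..1}|lborel. 1 / (x - y)) = ln ((x + \<epsilon>) - x) - ln (1 - x)"
        using e x01 by (intro int_left) auto
      also have "(ln (x - 0) - ln (x - (x - \<epsilon>))) + (ln ((x + \<epsilon>) - x) - ln (1 - x)) = ln \<bar>x\<bar> - ln \<bar>x - 1\<bar>"
        using x01 by simp
      finally show "(LINT y:{y. \<epsilon> < \<bar>x - y\<bar> \<and> \<bar>x - y\<bar> < 1 / \<epsilon>}|lborel. f0 y / (x - y)) = ln \<bar>x\<bar> - ln \<bar>x - 1\<bar>"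
        unfolding S_def .
    qed
  qed
qed

lemma hilbert_f0: "is_hilbert f0 G"
  unfolding is_hilbert_def
proof (intro conjI G_meas)
  have *: "hilbert_pv f0 x (G x)" if xx: "x \<noteq> 0" "x \<noteq> 1" for x
  proof -
    obtain e0 where e0: "e0 > 0" and H: "\<And>\<epsilon>. 0 < \<epsilon> \<Longrightarrow> \<epsilon> < e0 \<Longrightarrow>
       (LINT y:{y. \<epsilon> < \<bar>x - y\<bar> \<and> \<bar>x - y\<bar> < 1 / \<epsilon>}|lborel. f0 y / (x - y)) = ln \<bar>x\<bar> - ln \<bar>x - 1\<bar>"
      using pv_val[OF xx] by blast
    have "eventually (\<lambda>\<epsilon>. (1 / pi) * (LINT y:{y. \<epsilon> < \<bar>x - y\<bar> \<and> \<bar>x - y\<bar> < 1 / \<epsilon>}|lborel. f0 y / (x - y)) = G x) (at_right 0)"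
    proof (rule eventually_at_rightI[OF _ e0])
      fix \<epsilon> :: real assume "\<epsilon> \<in> {0<..<e0}"
      then have "(LINT y:{y. \<epsilon> < \<bar>x - y\<bar> \<and> \<bar>x - y\<bar> < 1 / \<epsilon>}|lborel. f0 y / (x - y)) = ln \<bar>x\<bar> - ln \<bar>x - 1\<bar>"
        by (intro H) auto
      then show "(1 / pi) * (LINT y:{y. \<epsilon> < \<bar>x - y\<bar> \<and> \<bar>x - y\<bar> < 1 / \<epsilon>}|lborel. f0 y / (x - y)) = G x"
        by (simp only: G_def) simp
    qed
    then show ?thesis unfolding hilbert_pv_def by (rule tendsto_eventually)
  qed
  show "AE x in lborel. hilbert_pv f0 x (G x)"
    using AE_conjI[OF AE_lborel_singleton[of 0] AE_lborel_singleton[of 1]]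
    by (rule AE_mp) (use * in blast)
qed


lemma G_lower:
  assumes d: "0 < d" "d \<le> 1/2" and x: "0 < x" "x \<le> exp (-1/d)"
  shows "1 / (2 * pi * d) \<le> \<bar>G x\<bar>"
proof -
  have "1 \<le> 1 / d" using d by (simp add: field_simps)
  then have e1: "exp (-1/d) \<le> exp (-1)" by simp
  have "2 \<le> exp (1::real)" using exp_ge_add_one_self[of 1] by simp
  then have e2: "exp (-1::real) \<le> 1/2" by (simp add: exp_minus divide_simps)
  have x1: "x < 1" using x e1 e2 by linarith
  have "ln x \<le> ln (exp (-1/d))" using x by (subst ln_le_cancel_iff) auto
  then have lx: "ln x \<le> -1/d" by simp
  have "exp (-1) \<le> 1 - x" using x e1 e2 by linarith
  then have "ln (exp (-1)) \<le> ln (1 - x)" using x1 by (subst ln_le_cancel_iff) auto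
  then have l1: "-1 \<le> ln (1 - x)" by simp
  have "1 / (2 * d) \<le> 1 / d - 1" using d by (simp add: field_simps)
  then have L: "1 / (2 * d) \<le> ln (1 - x) - ln x" using lx l1 by linarith
  have Gx: "G x = (ln x - ln (1 - x)) / pi" using x x1 by (simp add: G_def)
  have "0 < 1 / (2 * d)" using d by simp
  then have "ln x - ln (1 - x) \<le> 0" using L by linarith
  then have "\<bar>ln x - ln (1 - x)\<bar> = ln (1 - x) - ln x" by (simp add: abs_of_nonpos)
  then have "\<bar>G x\<bar> = (ln (1 - x) - ln x) / pi" unfolding Gx by (simp add: abs_divide)
  moreover have "1 / (2 * d) / pi \<le> (ln (1 - x) - ln x) / pi" using L by (intro divide_right_mono) auto
  ultimately have "1 / (2 * d) / pi \<le> \<bar>G x\<bar>" by simp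
  moreover have "1 / (2 * d) / pi = 1 / (2 * pi * d)" by (simp add: mult_ac)
  ultimately show ?thesis by (simp add: ac_simps)
qed

lemma G_int_lower:
  assumes d: "0 < d" "d \<le> 1/2" and p: "0 < p"
  shows "ennreal ((1 / (2 * pi * d)) powr p * (exp (-1) / d))
     \<le> (\<integral>\<^sup>+x. enn_powr (ennreal \<bar>G x\<bar>) p * ennreal (Wt d x) \<partial>lborel)"
proof -
  define x0 where "x0 = exp (-1/d)"
  have x0: "0 < x0" unfolding x0_def by simp
  have "(\<integral>\<^sup>+x. ennreal ((1 / (2 * pi * d)) powr p) * (ennreal (x powr (d - 1)) * indicator {0..x0} x) \<partial>lborel)
     \<le> (\<integral>\<^sup>+x. enn_powr (ennreal \<bar>G x\<bar>) p * ennreal (Wt d x) \<partial>lborel)"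
  proof (intro nn_integral_mono)
    fix x :: real
    show "ennreal ((1 / (2 * pi * d)) powr p) * (ennreal (x powr (d - 1)) * indicator {0..x0} x)
       \<le> enn_powr (ennreal \<bar>G x\<bar>) p * ennreal (Wt d x)"
    proof (cases "0 < x \<and> x \<le> x0")
      case True
      have "ennreal ((1 / (2 * pi * d)) powr p) \<le> enn_powr (ennreal \<bar>G x\<bar>) p"
        using G_lower[OF d, of x] True d p unfolding x0_def by (intro enn_powr_ge) auto
      moreover have "ennreal (x powr (d - 1)) * indicator {0..x0} x = ennreal (Wt d x)"
        using True by (simp add: Wt_def)
      ultimately show ?thesis by (simp add: mult_right_mono)
    next
      case False
      have Z: "ennreal (x powr (d - 1)) * indicator {0..x0} x = 0"
      proof (cases "x = 0")
        case True then show ?thesis by simp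
      next
        case False
        then have "x \<notin> {0..x0}" using \<open>\<not> (0 < x \<and> x \<le> x0)\<close> by auto
        then show ?thesis by simp
      qed
      show ?thesis unfolding Z by simp
    qed
  qed
  moreover have "(\<integral>\<^sup>+x. ennreal ((1 / (2 * pi * d)) powr p) * (ennreal (x powr (d - 1)) * indicator {0..x0} x) \<partial>lborel)
      = ennreal ((1 / (2 * pi * d)) powr p) * ennreal (x0 powr d / d)"
    using d x0 by (simp add: nn_integral_cmult powr_int0)
  moreover have "x0 powr d = exp (-1)" unfolding x0_def using d by (simp add: exp_powr_real)
  moreover have "ennreal ((1 / (2 * pi * d)) powr p) * ennreal (exp (-1) / d) = ennreal ((1 / (2 * pi * d)) powr p * (exp (-1) / d))"
    using d by (intro ennreal_mult[symmetric]) auto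
  ultimately show ?thesis by simp
qed

lemma Ms_wnorm:
  assumes d: "0 < d" "d \<le> 1/2" "d \<le> p / 2"
  shows "wnorm p (Wt d) (Ms s f0) \<le> ennreal ((8 / d) powr (1 / p))"
proof -
  have dp: "d < p" using d by simp
  have I0: "(\<integral>\<^sup>+x. enn_powr (Ms s f0 x) p * ennreal (Wt d x) \<partial>lborel)
     \<le> ennreal (2 * (2 powr d / d + 2 powr p * (2 powr (d - p) / (p - d))))"
    by (rule wint_bound[OF d(1) dp]) (auto simp: Ms_bound)
  have X: "2 * (2 powr d / d + 2 powr p * (2 powr (d - p) / (p - d))) \<le> 8 / d"
  proof -
    have a: "2 powr d \<le> (2::real)" using powr_mono[of d 1 2] d by simp
    have b: "2 powr p * 2 powr (d - p) = (2::real) powr d" by (simp add: powr_add[symmetric])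
    have "2 powr d / d \<le> 2 / d" using a d by (simp add: divide_right_mono)
    moreover have "2 powr p * (2 powr (d - p) / (p - d)) \<le> 2 / d"
    proof -
      have "2 powr p * (2 powr (d - p) / (p - d)) = 2 powr d / (p - d)" using b by simp
      also have "\<dots> \<le> 2 / (p - d)" using a dp by (simp add: divide_right_mono)
      also have "\<dots> \<le> 2 / d" using d by (intro divide_left_mono) auto
      finally show ?thesis .
    qed
    ultimately show ?thesis by simp
  qed
  have I: "(\<integral>\<^sup>+x. enn_powr (Ms s f0 x) p * ennreal (Wt d x) \<partial>lborel) \<le> ennreal (8 / d)"
    using I0 X by (rule order.trans[OF _ ennreal_leI])
  show ?thesis unfolding wnorm_def
    by (rule enn_powr_le) (use I d in auto)
qed


theorem lemma4p6:
  fixes s p q \<alpha> :: real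
  assumes "s > 0" and "p > 0" and "q > 1" and "s > 1 / p - 1" and "\<alpha> \<ge> 0"
    and "\<exists>C>0. \<forall>w f g. in_Aq q w \<longrightarrow> Hp_loc p w f \<longrightarrow> is_hilbert f g \<longrightarrow>
           wnorm p w (\<lambda>x. ennreal \<bar>g x\<bar>)
             \<le> ennreal (C * Aq_const q w powr \<alpha>) * wnorm p w (Ms s f)"
  shows "\<alpha> \<ge> 1"
proof (rule ccontr)
  assume "\<not> \<alpha> \<ge> 1"
  then have a1: "\<alpha> < 1" by simp
  have p: "0 < p" and q: "1 < q" and a0: "0 \<le> \<alpha>" using assms by auto
  from assms(6) obtain C where C: "C > 0" and H: "\<forall>w f g. in_Aq q w \<longrightarrow> Hp_loc p w f \<longrightarrow> is_hilbert f g \<longrightarrow>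
           wnorm p w (\<lambda>x. ennreal \<bar>g x\<bar>)
             \<le> ennreal (C * Aq_const q w powr \<alpha>) * wnorm p w (Ms s f)" by blast
  define d1 where "d1 = min (1/2) (p/2)"
  define K1 where "K1 = exp (-1/p) / (2*pi)"
  define K2 where "K2 = C * 4 powr \<alpha> * 8 powr (1/p)"
  have d1: "0 < d1" using p by (simp add: d1_def)
  have K1: "0 < K1" by (simp add: K1_def)
  have K2: "0 < K2" using C by (simp add: K2_def)
  have key: "K1 \<le> K2 * d powr (1 - \<alpha>)" if dd: "0 < d" "d \<le> d1" for d
  proof -
    have d: "0 < d" "d \<le> 1/2" "d \<le> p/2" "d \<le> 1" "d < p" using dd p by (auto simp: d1_def)
    note Aq = Wt_Aq[OF d(1) d(4) q]
    have hyp: "wnorm p (Wt d) (\<lambda>x. ennreal \<bar>G x\<bar>) \<le> ennreal (C * Aq_const q (Wt d) powr \<alpha>) * wnorm p (Wt d) (Ms s f0)"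
      using H Aq(1) Hp_f0[OF d(1) d(5)] hilbert_f0 by blast
    define A where "A = (1 / (2 * pi * d)) powr p * (exp (-1) / d)"
    have A0: "0 \<le> A" unfolding A_def using d by simp
    have lo: "ennreal (A powr (1/p)) \<le> wnorm p (Wt d) (\<lambda>x. ennreal \<bar>G x\<bar>)"
      unfolding wnorm_def by (rule enn_powr_ge) (use G_int_lower[OF d(1) d(2) p] A0 p in \<open>auto simp: A_def\<close>)
    have up1: "wnorm p (Wt d) (Ms s f0) \<le> ennreal ((8 / d) powr (1 / p))"
      using Ms_wnorm[OF d(1) d(2) d(3)] .
    have "Aq_const q (Wt d) powr \<alpha> \<le> (4 / d) powr \<alpha>"
      using Aq(2) Aq(3) a0 by (intro powr_mono2) auto
    then have up2: "ennreal (C * Aq_const q (Wt d) powr \<alpha>) \<le> ennreal (C * (4 / d) powr \<alpha>)"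
      using C by (intro ennreal_leI mult_left_mono) auto
    have "ennreal (A powr (1/p)) \<le> ennreal (C * (4 / d) powr \<alpha>) * ennreal ((8 / d) powr (1 / p))"
      using lo hyp mult_mono[OF up2 up1] by (auto intro: order.trans)
    also have "\<dots> = ennreal (C * (4 / d) powr \<alpha> * (8 / d) powr (1 / p))"
      using C by (intro ennreal_mult[symmetric]) auto
    finally have R: "A powr (1/p) \<le> C * (4 / d) powr \<alpha> * (8 / d) powr (1 / p)"
      using C by (subst (asm) ennreal_le_iff) auto
    define u where "u = (1/d) powr (1/p)"
    define v where "v = (1/d) powr \<alpha>"
    have u: "0 < u" unfolding u_def using d by simp
    have "A powr (1/p) = ((1 / (2 * pi * d)) powr p) powr (1/p) * (exp (-1) / d) powr (1/p)"
      unfolding A_def using d by (intro powr_mult)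
    also have "((1 / (2 * pi * d)) powr p) powr (1/p) = 1 / (2 * pi * d)"
      using p d by (simp add: powr_powr)
    also have "(exp (-1) / d) powr (1/p) = exp (-1/p) * u"
      unfolding u_def using d by (simp add: powr_divide exp_powr_real)
    finally have LA: "A powr (1/p) = 1 / (2 * pi * d) * (exp (-1/p) * u)" .
    have "(8 / d) powr (1 / p) = 8 powr (1/p) * u"
      unfolding u_def using d by (simp add: powr_mult[symmetric])
    moreover have "(4 / d) powr \<alpha> = 4 powr \<alpha> * v"
      unfolding v_def using d by (simp add: powr_mult[symmetric])
    ultimately have "1 / (2 * pi * d) * exp (-1/p) * u \<le> (C * 4 powr \<alpha> * v * 8 powr (1/p)) * u"
      using R LA by (simp add: ac_simps)
    then have "1 / (2 * pi * d) * exp (-1/p) \<le> C * 4 powr \<alpha> * v * 8 powr (1/p)"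
      using u by (rule mult_right_le_imp_le)
    then have "K1 / d \<le> K2 * v"
      by (simp add: K1_def K2_def field_simps)
    then have "K1 \<le> K2 * (v * d)"
      using d by (simp add: field_simps)
    also have "v * d = d powr (1 - \<alpha>)"
      unfolding v_def using d by (simp add: powr_divide powr_diff)
    finally show ?thesis .
  qed
  define d where "d = min d1 ((K1 / (2 * K2)) powr (1 / (1 - \<alpha>)))"
  have dpos: "0 < d" unfolding d_def using d1 K1 K2 by simp
  have "d powr (1 - \<alpha>) \<le> ((K1 / (2 * K2)) powr (1 / (1 - \<alpha>))) powr (1 - \<alpha>)"
    using dpos a1 unfolding d_def by (intro powr_mono2) auto
  also have "\<dots> = K1 / (2 * K2)"
    using a1 K1 K2 by (simp add: powr_powr)
  finally have "K2 * d powr (1 - \<alpha>) \<le> K2 * (K1 / (2 * K2))"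
    using K2 by (intro mult_left_mono) auto
  moreover have "K1 \<le> K2 * d powr (1 - \<alpha>)" using key[OF dpos] d_def by simp
  ultimately show False using K1 K2 by (simp add: field_simps)
qed

end
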